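(* Let $M$ be a simple restricted $\bar{\mathfrak D}$-module with central charge $c$ and level $\ell\ne0$. If $r_M=-\infty$, then $M=K(z)^{\bar{\mathfrak D}}$ for some $z\in\mathbb C$ (i.e. $K=M$ and the $\bar{\mathfrak D}$-action is the one defining $K(z)^{\bar{\mathfrak D}}$). Hence $c=1-\frac{12z^2}{\ell}$ and $K$ is a simple $\bar{\mathfrak h}$-module.
   Context: $\bar{\mathfrak D}$ has basis $\{d_m,h_r,\bar c_1,\bar c_2,\bar c_3:m,r\in\mathbb Z\}$, brackets $[d_m,d_n]=(m-n)d_{m+n}+\delta_{m+n,0}\frac{m^3-m}{12}\bar c_1$, $[d_m,h_r]=-rh_{m+r}+\delta_{m+r,0}(m^2+m)\bar c_2$, $[h_r,h_s]=r\delta_{r+s,0}\bar c_3$, $\bar c_i$ central; $\bar{\mathfrak h}=\mathrm{span}\{h_r,\bar c_3\}$. Restricted: each vector killed by $d_i,h_i$ for large $i$. Central charge $c$: $\bar c_1$ acts as $c$; level $\ell$: $\bar c_3$ acts as $\ell$. For $z\in\mathbb C$ and a restricted $\bar{\mathfrak h}$-module $H$ of level $\ell\ne0$, $H(z)^{\bar{\mathfrak D}}$ is $H$ with $\bar c_1\mapsto1-\frac{12z^2}{\ell}$, $\bar c_2\mapsto z$, $d_n\mapsto\bar L_n=\frac1{2\ell}\sum_{k\in\mathbb Z}{:}h_{n-k}h_k{:}+\frac{(n+1)z}{\ell}h_n$, where ${:}h_rh_s{:}=h_rh_s$ if $r\le s$, $=h_sh_r$ otherwise. Invariants: with $\bar{\mathfrak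 h}_{\ge r}=\bigoplus_{i\ge0}\mathbb Ch_{r+i}$: $M(r)=\mathrm{Ann}_M(\bar{\mathfrak h}_{\ge r})$, $n_M=\min\{r:M(r)\ne0\}$, $M_0=M(n_M)$. With $z_M$ the scalar of $\bar c_2$ on $M$, let $\bar L_n$ (with $z=z_M$) act on $M$ and $d'_n=d_n-\bar L_n$; $Y_n=\bigcap_{p\ge n}\mathrm{Ann}_{M_0}(d'_p)$, $r_M=\min\{n\in\mathbb Z:Y_n\ne0\}$, or $-\infty$ if all $Y_n\ne0$; $K_0=\bigcap_nY_n$ when $r_M=-\infty$; $K=U(\bar{\mathfrak h})K_0$. *)

theory Defs
  imports Main "HOL.Complex"
begin

text \<open>A module M over the Lie algebra D-bar is modelled as a complex vector space
(the whole type 'm, with scalar multiplication sc), together with the actions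
d m and h r of the basis vectors d_m, h_r. The central elements c1, c2, c3 act
by the scalars c, zc, l respectively.\<close>

definition is_Dbar_module ::
  "(complex \<Rightarrow> 'm::ab_group_add \<Rightarrow> 'm) \<Rightarrow> (int \<Rightarrow> 'm \<Rightarrow> 'm) \<Rightarrow> (int \<Rightarrow> 'm \<Rightarrow> 'm)
   \<Rightarrow> complex \<Rightarrow> complex \<Rightarrow> complex \<Rightarrow> bool" where
  "is_Dbar_module sc d h c zc l \<longleftrightarrow>
     vector_space sc \<and>
     (\<forall>m. Vector_Spaces.linear sc sc (d m)) \<and>
     (\<forall>r. Vector_Spaces.linear sc sc (h r)) \<and>
     (\<forall>m n v. d m (d n v) - d n (d m v) =
        sc (of_int (m - n)) (d (m + n) v) +
        (if m + n = 0 then sc ((of_int m ^ 3 - of_int m) / 12 * c) v else 0)) \<and>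
     (\<forall>m r v. d m (h r v) - h r (d m v) =
        sc (- of_int r) (h (m + r) v) +
        (if m + r = 0 then sc ((of_int m ^ 2 + of_int m) * zc) v else 0)) \<and>
     (\<forall>r s v. h r (h s v) - h s (h r v) =
        (if r + s = 0 then sc (of_int r * l) v else 0))"

definition restricted :: "(int \<Rightarrow> 'm::zero \<Rightarrow> 'm) \<Rightarrow> (int \<Rightarrow> 'm \<Rightarrow> 'm) \<Rightarrow> bool" where
  "restricted d h \<longleftrightarrow> (\<forall>v. \<exists>N. \<forall>i\<ge>N. d i v = 0 \<and> h i v = 0)"

text \<open>Simplicity of M as a D-bar-module (central elements act by scalars,
so every subspace is invariant under them).\<close>
definition simple_Dbar ::
  "(complex \<Rightarrow> 'm::ab_group_add \<Rightarrow> 'm) \<Rightarrow> (int \<Rightarrow> 'm \<Rightarrow> 'm) \<Rightarrow> (int \<Rightarrow> 'm \<Rightarrow> 'm) \<Rightarrow> bool" where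
  "simple_Dbar sc d h \<longleftrightarrow> (\<exists>v::'m. v \<noteq> 0) \<and>
     (\<forall>W. module.subspace sc W \<and> (\<forall>m. d m ` W \<subseteq> W) \<and> (\<forall>r. h r ` W \<subseteq> W)
          \<longrightarrow> W = {0} \<or> W = UNIV)"

text \<open>Simplicity of a subspace K as an h-bar-module (c3 acts by a scalar).\<close>
definition simple_hbar_sub ::
  "(complex \<Rightarrow> 'm::ab_group_add \<Rightarrow> 'm) \<Rightarrow> (int \<Rightarrow> 'm \<Rightarrow> 'm) \<Rightarrow> 'm set \<Rightarrow> bool" where
  "simple_hbar_sub sc h K \<longleftrightarrow> module.subspace sc K \<and> (\<forall>r. h r ` K \<subseteq> K) \<and>
     (\<exists>v\<in>K. v \<noteq> 0) \<and>
     (\<forall>W. module.subspace sc W \<and> W \<subseteq> K \<and> (\<forall>r. h r ` W \<subseteq> W) \<longrightarrow> W = {0} \<or> W = K)"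

definition fsum :: "(int \<Rightarrow> 'm::comm_monoid_add) \<Rightarrow> 'm" where
  "fsum f = sum f {k. f k \<noteq> 0}"

definition Lbar ::
  "(complex \<Rightarrow> 'm::ab_group_add \<Rightarrow> 'm) \<Rightarrow> (int \<Rightarrow> 'm \<Rightarrow> 'm) \<Rightarrow> complex \<Rightarrow> complex \<Rightarrow> int \<Rightarrow> 'm \<Rightarrow> 'm" where
  "Lbar sc h l z n v =
     sc (1 / (2 * l)) (fsum (\<lambda>k. if n - k \<le> k then h (n - k) (h k v) else h k (h (n - k) v)))
     + sc ((of_int n + 1) * z / l) (h n v)"

definition Msub :: "(int \<Rightarrow> 'm::zero \<Rightarrow> 'm) \<Rightarrow> int \<Rightarrow> 'm set" where
  "Msub h r = {v. \<forall>i::int. i \<ge> 0 \<longrightarrow> h (r + i) v = 0}"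

definition nM :: "(int \<Rightarrow> 'm::zero \<Rightarrow> 'm) \<Rightarrow> int" where
  "nM h = (LEAST r. \<exists>v\<in>Msub h r. v \<noteq> 0)"

definition M0 :: "(int \<Rightarrow> 'm::zero \<Rightarrow> 'm) \<Rightarrow> 'm set" where
  "M0 h = Msub h (nM h)"

definition Yset ::
  "(complex \<Rightarrow> 'm::ab_group_add \<Rightarrow> 'm) \<Rightarrow> (int \<Rightarrow> 'm \<Rightarrow> 'm) \<Rightarrow> (int \<Rightarrow> 'm \<Rightarrow> 'm)
   \<Rightarrow> complex \<Rightarrow> complex \<Rightarrow> int \<Rightarrow> 'm set" where
  "Yset sc d h l zM n = {v \<in> M0 h. \<forall>p\<ge>n. d p v - Lbar sc h l zM p v = 0}"

text \<open>r_M = -infinity means every Y_n is nonzero.\<close>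
definition rM_minus_infty ::
  "(complex \<Rightarrow> 'm::ab_group_add \<Rightarrow> 'm) \<Rightarrow> (int \<Rightarrow> 'm \<Rightarrow> 'm) \<Rightarrow> (int \<Rightarrow> 'm \<Rightarrow> 'm)
   \<Rightarrow> complex \<Rightarrow> complex \<Rightarrow> bool" where
  "rM_minus_infty sc d h l zM \<longleftrightarrow> (\<forall>n. \<exists>v\<in>Yset sc d h l zM n. v \<noteq> 0)"

definition K0 ::
  "(complex \<Rightarrow> 'm::ab_group_add \<Rightarrow> 'm) \<Rightarrow> (int \<Rightarrow> 'm \<Rightarrow> 'm) \<Rightarrow> (int \<Rightarrow> 'm \<Rightarrow> 'm)
   \<Rightarrow> complex \<Rightarrow> complex \<Rightarrow> 'm set" where
  "K0 sc d h l zM = (\<Inter>n. Yset sc d h l zM n)"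

definition hgen :: "(complex \<Rightarrow> 'm::ab_group_add \<Rightarrow> 'm) \<Rightarrow> (int \<Rightarrow> 'm \<Rightarrow> 'm) \<Rightarrow> 'm set \<Rightarrow> 'm set" where
  "hgen sc h S = \<Inter>{W. module.subspace sc W \<and> S \<subseteq> W \<and> (\<forall>r. h r ` W \<subseteq> W)}"

end

theory Submission
  imports Defs
begin

locale dbar = vector_space sc
  for sc :: "complex \<Rightarrow> 'm::ab_group_add \<Rightarrow> 'm" +
  fixes d h :: "int \<Rightarrow> 'm \<Rightarrow> 'm" and c z l :: complex
  assumes dlin: "Vector_Spaces.linear sc sc (d m)"
    and hlin: "Vector_Spaces.linear sc sc (h r)"
    and dd: "d m (d n v) - d n (d m v) =
        sc (of_int (m - n)) (d (m + n) v) +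
        (if m + n = 0 then sc ((of_int m ^ 3 - of_int m) / 12 * c) v else 0)"
    and dh: "d m (h r v) - h r (d m v) =
        sc (- of_int r) (h (m + r) v) +
        (if m + r = 0 then sc ((of_int m ^ 2 + of_int m) * z) v else 0)"
    and hh: "h r (h s v) - h s (h r v) = (if r + s = 0 then sc (of_int r * l) v else 0)"
    and restr: "restricted d h"
    and lnz: "l \<noteq> 0"
begin

lemma h_hom: "module_hom sc sc (h r)"
  using hlin[of r] by (simp add: module_hom_iff_linear)
lemma d_hom: "module_hom sc sc (d r)"
  using dlin[of r] by (simp add: module_hom_iff_linear)

lemma h_add: "h r (x + y) = h r x + h r y" using module_hom.add[OF h_hom] .
lemma h_sc: "h r (sc a x) = sc a (h r x)" using module_hom.scale[OF h_hom] .
lemma h_zero[simp]: "h r 0 = 0" using module_hom.zero[OF h_hom] .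
lemma h_diff: "h r (x - y) = h r x - h r y" using module_hom.diff[OF h_hom] .
lemma h_sum: "h r (sum g A) = (\<Sum>a\<in>A. h r (g a))" using module_hom.sum[OF h_hom] .
lemma d_add: "d r (x + y) = d r x + d r y" using module_hom.add[OF d_hom] .
lemma d_sc: "d r (sc a x) = sc a (d r x)" using module_hom.scale[OF d_hom] .
lemma d_zero[simp]: "d r 0 = 0" using module_hom.zero[OF d_hom] .
lemma d_diff: "d r (x - y) = d r x - d r y" using module_hom.diff[OF d_hom] .
lemma d_sum: "d r (sum g A) = (\<Sum>a\<in>A. d r (g a))" using module_hom.sum[OF d_hom] .

definition Q :: "int \<Rightarrow> int \<Rightarrow> 'm \<Rightarrow> 'm" where
  "Q a b w = (if a \<le> b then h a (h b w) else h b (h a w))"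
definition S :: "int \<Rightarrow> 'm \<Rightarrow> 'm" where
  "S n w = fsum (\<lambda>k. Q (n - k) k w)"
abbreviation L where "L \<equiv> Lbar sc h l z"

lemma L_def': "L n w = sc (1 / (2 * l)) (S n w) + sc ((of_int n + 1) * z / l) (h n w)"
  unfolding Lbar_def S_def Q_def by (rule refl)

definition kl :: "int \<Rightarrow> 'm \<Rightarrow> bool" where "kl N w \<longleftrightarrow> (\<forall>j\<ge>N. h j w = 0)"

lemma ex_kl: "\<exists>N. kl N w"
  using restr unfolding restricted_def kl_def by metis

lemma kl_mono: "kl N w \<Longrightarrow> N \<le> N' \<Longrightarrow> kl N' w"
  unfolding kl_def by auto

lemma ex_kl_ge: "\<exists>N. N \<ge> M \<and> kl N w"
proof -
  obtain N where "kl N w" using ex_kl by blast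
  then show ?thesis by (intro exI[of _ "max N M"]) (auto intro: kl_mono)
qed

lemma hcomm: "h j (h r w) = h r (h j w) + (if j + r = 0 then sc (of_int j * l) w else 0)"
  using hh[of j r w] by (simp add: diff_eq_eq)

lemma kl_h: "kl N w \<Longrightarrow> \<bar>r\<bar> < N \<Longrightarrow> kl N (h r w)"
proof -
  assume k: "kl N w" and r: "\<bar>r\<bar> < N"
  show ?thesis unfolding kl_def
  proof (intro allI impI)
    fix j assume j: "j \<ge> N"
    have "j + r \<noteq> 0" using j r by linarith
    then show "h j (h r w) = 0" using hcomm[of j r w] k j unfolding kl_def by simp
  qed
qed

lemma Q_supp: "kl N w \<Longrightarrow> Q (n - k) k w \<noteq> 0 \<Longrightarrow> n - N < k \<and> k < N"
proof -
  assume k: "kl N w" and q: "Q (n - k) k w \<noteq> 0"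
  show ?thesis
  proof (cases "n - k \<le> k")
    case True
    then have "h k w \<noteq> 0" using q unfolding Q_def by auto
    then have "k < N" using k unfolding kl_def by (meson linorder_not_le)
    then show ?thesis using True by linarith
  next
    case False
    then have "h (n - k) w \<noteq> 0" using q unfolding Q_def by auto
    then have "n - k < N" using k unfolding kl_def by (meson linorder_not_le)
    then show ?thesis using False by linarith
  qed
qed

lemma fsum_eq: fixes f :: "int \<Rightarrow> 'a::comm_monoid_add" shows "finite I \<Longrightarrow> {k. f k \<noteq> 0} \<subseteq> I \<Longrightarrow> fsum f = sum f I"
  unfolding fsum_def by (rule sum.mono_neutral_left) (auto simp del: )

lemma sum_supp: fixes f :: "int \<Rightarrow> 'a::comm_monoid_add" shows "finite A \<Longrightarrow> finite B \<Longrightarrow> {k. f k \<noteq> 0} \<subseteq> A \<Longrightarrow> {k. f k \<noteq> 0} \<subseteq> B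
   \<Longrightarrow> sum f A = sum f B"
proof -
  assume a: "finite A" "finite B" "{k. f k \<noteq> 0} \<subseteq> A" "{k. f k \<noteq> 0} \<subseteq> B"
  have "fsum f = sum f A" using a by (intro fsum_eq)
  moreover have "fsum f = sum f B" using a by (intro fsum_eq)
  ultimately show ?thesis by simp
qed

lemma S_eq: "kl N w \<Longrightarrow> finite I \<Longrightarrow> {n - N<..<N} \<subseteq> I \<Longrightarrow> S n w = (\<Sum>k\<in>I. Q (n - k) k w)"
  unfolding S_def
proof (rule fsum_eq)
  assume "kl N w" "finite I" "{n - N<..<N} \<subseteq> I"
  then show "finite I" "{k. Q (n - k) k w \<noteq> 0} \<subseteq> I"
    using Q_supp[of N w n] by force+
qed


lemma kl_add: "kl N x \<Longrightarrow> kl N y \<Longrightarrow> kl N (x + y)"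
  unfolding kl_def by (simp add: h_add)
lemma kl_sc: "kl N x \<Longrightarrow> kl N (sc a x)"
  unfolding kl_def by (simp add: h_sc)

lemma Q_add: "Q a b (x + y) = Q a b x + Q a b y"
  unfolding Q_def by (simp add: h_add)
lemma Q_sc: "Q a b (sc \<alpha> x) = sc \<alpha> (Q a b x)"
  unfolding Q_def by (simp add: h_sc)

lemma S_add: "S n (x + y) = S n x + S n y"
proof -
  obtain N1 where 1: "kl N1 x" using ex_kl by blast
  obtain N2 where 2: "kl N2 y" using ex_kl by blast
  define N where "N = max N1 N2"
  have x: "kl N x" and y: "kl N y" using 1 2 kl_mono N_def by auto
  have xy: "kl N (x + y)" using x y by (rule kl_add)
  show ?thesis
    using S_eq[OF x, of "{n - N<..<N}"] S_eq[OF y, of "{n - N<..<N}"] S_eq[OF xy, of "{n - N<..<N}"]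
    by (simp add: Q_add sum.distrib)
qed

lemma S_sc: "S n (sc \<alpha> x) = sc \<alpha> (S n x)"
proof -
  obtain N where x: "kl N x" using ex_kl by blast
  have y: "kl N (sc \<alpha> x)" using x by (rule kl_sc)
  show ?thesis
    using S_eq[OF x, of "{n - N<..<N}"] S_eq[OF y, of "{n - N<..<N}"]
    by (simp add: Q_sc scale_sum_right)
qed

lemma S_hom: "module_hom sc sc (S n)"
  by (simp add: module_hom_def module_hom_axioms_def S_add S_sc module_axioms)

lemma L_add: "L n (x + y) = L n x + L n y"
  unfolding L_def' by (simp add: S_add h_add scale_right_distrib)
lemma L_sc: "L n (sc \<alpha> x) = sc \<alpha> (L n x)"
  unfolding L_def' by (simp add: S_sc h_sc scale_right_distrib mult.commute)
lemma L_hom: "module_hom sc sc (L n)"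
  by (simp add: module_hom_def module_hom_axioms_def L_add L_sc module_axioms)

lemma S_commute:
  assumes F: "module_hom sc sc F" and Fh: "\<And>r x. F (h r x) = h r (F x)"
  shows "F (S n w) = S n (F w)"
proof -
  obtain N1 where 1: "kl N1 w" using ex_kl by blast
  obtain N2 where 2: "kl N2 (F w)" using ex_kl by blast
  define N where "N = max N1 N2"
  have x: "kl N w" and y: "kl N (F w)" using 1 2 kl_mono N_def by auto
  have FQ: "F (Q a b x) = Q a b (F x)" for a b x unfolding Q_def by (simp add: Fh)
  show ?thesis
    using S_eq[OF x, of "{n - N<..<N}"] S_eq[OF y, of "{n - N<..<N}"]
    by (simp add: module_hom.sum[OF F] FQ)
qed

lemma L_commute:
  assumes F: "module_hom sc sc F" and Fh: "\<And>r x. F (h r x) = h r (F x)"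
  shows "F (L n w) = L n (F w)"
  unfolding L_def' by (simp add: module_hom.add[OF F] module_hom.scale[OF F] S_commute[OF F Fh] Fh)

lemma hh3: "h a (h b (h r x)) = h r (h a (h b x))
   + (if a + r = 0 then sc (of_int a * l) (h b x) else 0)
   + (if b + r = 0 then sc (of_int b * l) (h a x) else 0)"
proof -
  have "h a (h b (h r x)) = h a (h r (h b x) + (if b + r = 0 then sc (of_int b * l) x else 0))"
    using hcomm[of b r x] by simp
  also have "\<dots> = h a (h r (h b x)) + (if b + r = 0 then sc (of_int b * l) (h a x) else 0)"
    by (simp add: h_add h_sc)
  also have "h a (h r (h b x)) = h r (h a (h b x)) + (if a + r = 0 then sc (of_int a * l) (h b x) else 0)"
    using hcomm[of a r "h b x"] by simp
  finally show ?thesis by simp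
qed

lemma Q_h: "Q a b (h r x) - h r (Q a b x) = (if b + r = 0 then sc (of_int b * l) (h a x) else 0)
   + (if a + r = 0 then sc (of_int a * l) (h b x) else 0)"
  unfolding Q_def using hh3[of a b r x] hh3[of b a r x] by (simp add: algebra_simps)

lemma sdelta: "finite I \<Longrightarrow> a \<in> I \<Longrightarrow> (\<And>k. P k \<longleftrightarrow> k = a) \<Longrightarrow>
   (\<Sum>k\<in>I. if P k then F k else (0::'a::comm_monoid_add)) = F a"
proof -
  assume "finite I" "a \<in> I" "\<And>k. P k \<longleftrightarrow> k = a"
  then have "(\<Sum>k\<in>I. if P k then F k else 0) = (\<Sum>k\<in>I. if k = a then F k else 0)" by simp
  also have "\<dots> = F a" using \<open>finite I\<close> \<open>a \<in> I\<close> by (simp add: sum.delta')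
  finally show ?thesis .
qed

lemma S_h: "S m (h r w) - h r (S m w) = sc (- 2 * of_int r * l) (h (m + r) w)"
proof -
  obtain N where N: "N \<ge> \<bar>r\<bar> + \<bar>m\<bar> + 1" and w: "kl N w" using ex_kl_ge by blast
  have hw: "kl N (h r w)" using w N by (intro kl_h) auto
  define I where "I = {m - N<..<N}"
  have fI: "finite I" unfolding I_def by simp
  have "S m (h r w) - h r (S m w) = (\<Sum>k\<in>I. Q (m - k) k (h r w) - h r (Q (m - k) k w))"
    using S_eq[OF w fI] S_eq[OF hw fI] by (simp add: I_def h_sum sum_subtractf)
  also have "\<dots> = (\<Sum>k\<in>I. (if k + r = 0 then sc (of_int k * l) (h (m - k) w) else 0)
      + (if m - k + r = 0 then sc (of_int (m - k) * l) (h k w) else 0))"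
    by (simp only: Q_h)
  also have "\<dots> = (\<Sum>k\<in>I. if k + r = 0 then sc (of_int k * l) (h (m - k) w) else 0)
      + (\<Sum>k\<in>I. if m - k + r = 0 then sc (of_int (m - k) * l) (h k w) else 0)"
    by (simp only: sum.distrib)
  also have "(\<Sum>k\<in>I. if k + r = 0 then sc (of_int k * l) (h (m - k) w) else 0)
      = sc (of_int (- r) * l) (h (m - (- r)) w)"
    by (rule sdelta[OF fI]) (use N in \<open>auto simp: I_def\<close>)
  also have "(\<Sum>k\<in>I. if m - k + r = 0 then sc (of_int (m - k) * l) (h k w) else 0)
      = sc (of_int (m - (m + r)) * l) (h (m + r) w)"
    by (rule sdelta[OF fI]) (use N in \<open>auto simp: I_def\<close>)
  also have "sc (of_int (- r) * l) (h (m - (- r)) w) + sc (of_int (m - (m + r)) * l) (h (m + r) w)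
     = sc (of_int (- r) * l + of_int (- r) * l) (h (m + r) w)"
  proof -
    have "m - (- r) = m + r" "m - (m + r) = - r" by simp_all
    then show ?thesis by (simp only: scale_left_distrib)
  qed
  also have "of_int (- r) * l + of_int (- r) * l = - 2 * of_int r * l" by simp
  finally show ?thesis .
qed

lemma L_h: "L m (h r w) - h r (L m w) = sc (- of_int r) (h (m + r) w) +
        (if m + r = 0 then sc ((of_int m ^ 2 + of_int m) * z) w else 0)"
proof -
  have "L m (h r w) - h r (L m w) = sc (1 / (2 * l)) (S m (h r w) - h r (S m w))
      + sc ((of_int m + 1) * z / l) (h m (h r w) - h r (h m w))"
    unfolding L_def' by (simp add: h_add h_sc algebra_simps)
  also have "\<dots> = sc (1 / (2 * l)) (sc (- 2 * of_int r * l) (h (m + r) w))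
      + sc ((of_int m + 1) * z / l) (if m + r = 0 then sc (of_int m * l) w else 0)"
    by (simp only: S_h hh)
  also have "sc (1 / (2 * l)) (sc (- 2 * of_int r * l) (h (m + r) w)) = sc (- of_int r) (h (m + r) w)"
    using lnz by simp
  also have "sc ((of_int m + 1) * z / l) (if m + r = 0 then sc (of_int m * l) w else 0)
     = (if m + r = 0 then sc ((of_int m ^ 2 + of_int m) * z) w else 0)"
  proof (cases "m + r = 0")
    case True
    have "(of_int m + 1) * z / l * (of_int m * l) = (of_int m ^ 2 + of_int m) * z"
      using lnz by (simp add: field_simps power2_eq_square)
    then show ?thesis using True by simp
  qed simp
  finally show ?thesis .
qed


lemma L_zero[simp]: "L n 0 = 0" using module_hom.zero[OF L_hom] .
lemma L_diff: "L n (x - y) = L n x - L n y" using module_hom.diff[OF L_hom] .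
lemma L_sum: "L n (sum g A) = (\<Sum>a\<in>A. L n (g a))" using module_hom.sum[OF L_hom] .

lemma L_h': "L m (h r w) = h r (L m w) + sc (- of_int r) (h (m + r) w) +
        (if m + r = 0 then sc ((of_int m ^ 2 + of_int m) * z) w else 0)"
  using L_h[of m r w] by (simp add: diff_eq_eq add.assoc)

lemma Qhh: "Q a b y = h a (h b y) - (if a > b \<and> a + b = 0 then sc (of_int a * l) y else 0)"
  unfolding Q_def using hcomm[of a b y] by auto

lemma hhQ: "h a (h b y) = Q a b y + (if a > b \<and> a + b = 0 then sc (of_int a * l) y else 0)"
  using Qhh[of a b y] by (simp add: eq_diff_eq)

definition anomc :: "int \<Rightarrow> int \<Rightarrow> int \<Rightarrow> complex" where
  "anomc m a b = (if m + a > b then - of_int (a * (m + a)) else 0) + (if a > m + b then - of_int (a * b) else 0)"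

lemma LQ: "L m (Q a b x) - Q a b (L m x) =
    sc (- of_int a) (Q (m + a) b x) + sc (- of_int b) (Q a (m + b) x)
  + (if m + a = 0 then sc ((of_int m ^ 2 + of_int m) * z) (h b x) else 0)
  + (if m + b = 0 then sc ((of_int m ^ 2 + of_int m) * z) (h a x) else 0)
  + (if a + b + m = 0 then sc (l * anomc m a b) x else 0)"
proof -
  define g where "g = (of_int m ^ 2 + of_int m) * z"
  have 1: "L m (h a (h b x)) - h a (h b (L m x)) =
     sc (- of_int a) (h (m + a) (h b x)) + sc (- of_int b) (h a (h (m + b) x))
     + (if m + a = 0 then sc g (h b x) else 0) + (if m + b = 0 then sc g (h a x) else 0)"
    unfolding g_def L_h'[of m a] L_h'[of m b] by (cases "m + b = 0") (simp_all add: h_add h_sc h_diff algebra_simps)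
  have 2: "L m (Q a b x) - Q a b (L m x) = L m (h a (h b x)) - h a (h b (L m x))"
    unfolding Qhh by (auto simp: L_diff L_sc)
  have 3: "sc (- of_int a) (h (m + a) (h b x)) = sc (- of_int a) (Q (m + a) b x)
     + (if m + a > b \<and> m + a + b = 0 then sc (- of_int (a * (m + a)) * l) x else 0)"
    unfolding hhQ by (simp add: scale_right_distrib)
  have 4: "sc (- of_int b) (h a (h (m + b) x)) = sc (- of_int b) (Q a (m + b) x)
     + (if a > m + b \<and> a + (m + b) = 0 then sc (- of_int (a * b) * l) x else 0)"
    unfolding hhQ by (simp add: scale_right_distrib mult.commute)
  have 5: "(if m + a > b \<and> m + a + b = 0 then sc (- of_int (a * (m + a)) * l) x else 0)
      + (if a > m + b \<and> a + (m + b) = 0 then sc (- of_int (a * b) * l) x else 0)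
      = (if a + b + m = 0 then sc (l * anomc m a b) x else 0)"
    unfolding anomc_def by (auto simp: algebra_simps scale_left_distrib)
  show ?thesis
    unfolding 2 1 3 4 g_def[symmetric] 5[symmetric] by (simp add: algebra_simps)
qed


lemma anom_supp: "anomc m (- m - k) k \<noteq> 0 \<Longrightarrow> k \<in> {- \<bar>m\<bar>..\<bar>m\<bar>}"
proof (rule ccontr)
  assume ne: "anomc m (- m - k) k \<noteq> 0" and k: "k \<notin> {- \<bar>m\<bar>..\<bar>m\<bar>}"
  have "(k \<ge> 0 \<and> k \<ge> - m) \<or> (k < 0 \<and> k < - m)" using k by auto
  then show False
  proof
    assume "k \<ge> 0 \<and> k \<ge> - m"
    then show False using ne unfolding anomc_def by auto
  next
    assume a: "k < 0 \<and> k < - m"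
    have "anomc m (- m - k) k = - of_int ((- m - k) * (m + (- m - k))) - of_int ((- m - k) * k)"
      using a unfolding anomc_def by auto
    also have "\<dots> = 0" by (simp add: algebra_simps)
    finally show False using ne by simp
  qed
qed

lemma sc_double: "sc a x + sc a x = sc (2 * a) x" "sc a x + (sc a x + y) = sc (2 * a) x + y"
  by (simp_all only: mult_2 scale_left_distrib add.assoc)

lemma sum_shift: "finite I \<Longrightarrow> (\<Sum>k\<in>I. F (k + m)) = (\<Sum>j\<in>(\<lambda>k. k + m) ` I. F (j::int))"
  by (simp add: sum.reindex inj_on_def)

lemma LS: "L m (S n w) - S n (L m w) = sc (of_int (m - n)) (S (m + n) w)
   + sc (2 * ((of_int m ^ 2 + of_int m) * z)) (h (m + n) w)
   + (if m + n = 0 then sc (l * (\<Sum>k\<in>{- \<bar>m\<bar>..\<bar>m\<bar>}. anomc m (- m - k) k)) w else 0)"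
proof -
  define g where "g = (of_int m ^ 2 + of_int m) * z"
  obtain N1 where N1: "N1 \<ge> \<bar>m\<bar> + \<bar>n\<bar> + 1" and w1: "kl N1 w" using ex_kl_ge by blast
  obtain N2 where N2: "N2 \<ge> N1" and w2: "kl N2 (L m w)" using ex_kl_ge by blast
  define N where "N = N2"
  have w: "kl N w" using w1 N2 kl_mono N_def by blast
  have lw: "kl N (L m w)" using w2 N_def by simp
  have Nb: "N \<ge> \<bar>m\<bar> + \<bar>n\<bar> + 1" using N1 N2 N_def by simp
  define R where "R = N + \<bar>m\<bar> + \<bar>n\<bar> + 1"
  define I where "I = {- R<..<R}"
  define J where "J = {m + n - N<..<N}"
  have fI: "finite I" and fJ: "finite J" unfolding I_def J_def by simp_all
  have sI: "{n - N<..<N} \<subseteq> I" unfolding I_def R_def by auto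
  have JI: "J \<subseteq> I" unfolding I_def J_def R_def by auto
  define T1 where "T1 k = sc (- of_int (n - k)) (Q (m + (n - k)) k w)" for k
  define F where "F j = sc (of_int (m - j)) (Q (m + n - j) j w)" for j
  define C1 where "C1 k = (if m + (n - k) = 0 then sc g (h k w) else 0)" for k
  define C2 where "C2 k = (if m + k = 0 then sc g (h (n - k) w) else 0)" for k
  define C3 where "C3 k = (if n - k + k + m = 0 then sc (l * anomc m (n - k) k) w else 0)" for k
  have "L m (S n w) - S n (L m w) = (\<Sum>k\<in>I. L m (Q (n - k) k w) - Q (n - k) k (L m w))"
    using S_eq[OF w fI sI] S_eq[OF lw fI sI] by (simp add: L_sum sum_subtractf)
  also have "\<dots> = (\<Sum>k\<in>I. T1 k + F (k + m) + C1 k + C2 k + C3 k)"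
  proof (rule sum.cong[OF refl])
    fix k
    have "m - (k + m) = - k" "m + n - (k + m) = n - k" "m + (n - k) = m + n - k" by simp_all
    then show "L m (Q (n - k) k w) - Q (n - k) k (L m w) = T1 k + F (k + m) + C1 k + C2 k + C3 k"
      unfolding LQ T1_def F_def C1_def C2_def C3_def g_def by (simp add: add.commute)
  qed
  also have "\<dots> = sum T1 I + (\<Sum>k\<in>I. F (k + m)) + sum C1 I + sum C2 I + sum C3 I"
    by (simp add: sum.distrib)
  also have "sum T1 I = sum T1 J"
  proof (rule sum_supp[OF fI fJ])
    have "T1 k \<noteq> 0 \<Longrightarrow> k \<in> J" for k
      using Q_supp[OF w, of "m + n" k] unfolding T1_def J_def
      by (metis add_diff_eq greaterThanLessThan_iff scale_zero_right)
    then show "{k. T1 k \<noteq> 0} \<subseteq> I" "{k. T1 k \<noteq> 0} \<subseteq> J" using JI by auto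
  qed
  also have "(\<Sum>k\<in>I. F (k + m)) = sum F J"
    unfolding sum_shift[OF fI]
  proof (rule sum_supp)
    have supp: "F k \<noteq> 0 \<Longrightarrow> k \<in> J" for k
      using Q_supp[OF w, of "m + n" k] unfolding F_def J_def
      by (metis greaterThanLessThan_iff scale_zero_right)
    have "J \<subseteq> (\<lambda>k. k + m) ` I"
    proof
      fix j assume "j \<in> J"
      then have "j - m \<in> I" using Nb unfolding J_def I_def R_def by auto
      then show "j \<in> (\<lambda>k. k + m) ` I" by (intro image_eqI[of _ _ "j - m"]) auto
    qed
    then show "{k. F k \<noteq> 0} \<subseteq> (\<lambda>k. k + m) ` I" "{k. F k \<noteq> 0} \<subseteq> J" using supp by auto
    show "finite ((\<lambda>k. k + m) ` I)" "finite J" using fI fJ by auto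
  qed
  also have "sum T1 J + sum F J = sc (of_int (m - n)) (S (m + n) w)"
  proof -
    have "sum T1 J + sum F J = (\<Sum>k\<in>J. sc (of_int (m - n)) (Q (m + n - k) k w))"
      unfolding sum.distrib[symmetric]
    proof (rule sum.cong[OF refl])
      fix k
      have e: "m + (n - k) = m + n - k" by simp
      have "T1 k + F k = sc (- of_int (n - k) + of_int (m - k)) (Q (m + n - k) k w)"
        by (simp only: T1_def F_def e scale_left_distrib)
      also have "- of_int (n - k) + of_int (m - k) = (of_int (m - n) :: complex)" by simp
      finally show "T1 k + F k = sc (of_int (m - n)) (Q (m + n - k) k w)" .
    qed
    also have "\<dots> = sc (of_int (m - n)) (S (m + n) w)"
      using S_eq[OF w fJ, of "m + n"] unfolding J_def by (simp add: scale_sum_right)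
    finally show ?thesis .
  qed
  also have "sum C1 I = sc g (h (m + n) w)"
    unfolding C1_def by (rule sdelta[OF fI]) (use Nb in \<open>auto simp: I_def R_def\<close>)
  also have "sum C2 I = sc g (h (m + n) w)"
  proof -
    have "sum C2 I = sc g (h (n - (- m)) w)"
      unfolding C2_def by (rule sdelta[OF fI]) (use Nb in \<open>auto simp: I_def R_def\<close>)
    then show ?thesis by (simp add: add.commute)
  qed
  also have "sum C3 I = (if m + n = 0 then sc (l * (\<Sum>k\<in>{- \<bar>m\<bar>..\<bar>m\<bar>}. anomc m (- m - k) k)) w else 0)"
  proof (cases "m + n = 0")
    case True
    then have nn: "n = - m" by simp
    have "sum C3 I = (\<Sum>k\<in>I. sc (l * anomc m (- m - k) k) w)"
      unfolding C3_def nn by simp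
    also have "\<dots> = sc (l * (\<Sum>k\<in>I. anomc m (- m - k) k)) w"
      by (simp add: scale_sum_left sum_distrib_left)
    also have "(\<Sum>k\<in>I. anomc m (- m - k) k) = (\<Sum>k\<in>{- \<bar>m\<bar>..\<bar>m\<bar>}. anomc m (- m - k) k)"
    proof (rule sum_supp[OF fI])
      have "{- \<bar>m\<bar>..\<bar>m\<bar>} \<subseteq> I" using Nb unfolding I_def R_def by auto
      then show "{k. anomc m (- m - k) k \<noteq> 0} \<subseteq> I" "{k. anomc m (- m - k) k \<noteq> 0} \<subseteq> {- \<bar>m\<bar>..\<bar>m\<bar>}"
        using anom_supp by blast+
    qed simp
    finally show ?thesis using True by simp
  qed (simp add: C3_def)
  finally show ?thesis
    unfolding g_def by (simp only: sc_double add.assoc)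
qed


lemma comb3: "sc \<alpha> (sc p X + sc q Y + sc e1 W) + sc \<beta> (sc s Y + sc e2 W)
   = sc (\<alpha> * p) X + sc (\<alpha> * q + \<beta> * s) Y + sc (\<alpha> * e1 + \<beta> * e2) W"
  by (simp add: scale_right_distrib scale_left_distrib add_ac)

lemma comb2: "sc t (sc \<alpha> X + sc \<beta> Y) + sc e W = sc (t * \<alpha>) X + sc (t * \<beta>) Y + sc e W"
  by (simp add: scale_right_distrib)

definition kappa :: "int \<Rightarrow> int \<Rightarrow> complex" where
  "kappa m n = (\<Sum>k\<in>{- \<bar>m\<bar>..\<bar>m\<bar>}. anomc m (- m - k) k) / 2
     + (of_int n + 1) * z / l * ((of_int m ^ 2 + of_int m) * z)"

lemma LL: "L m (L n w) - L n (L m w) = sc (of_int (m - n)) (L (m + n) w)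
   + sc (if m + n = 0 then kappa m n else 0) w"
proof -
  define \<alpha> where "\<alpha> = 1 / (2 * l)"
  define \<beta> where "\<beta> = (of_int n + 1) * z / l"
  define g where "g = (of_int m ^ 2 + of_int m) * z"
  define A where "A = (\<Sum>k\<in>{- \<bar>m\<bar>..\<bar>m\<bar>}. anomc m (- m - k) k)"
  define e1 where "e1 = (if m + n = 0 then l * A else 0)"
  define e2 where "e2 = (if m + n = 0 then g else 0)"
  have LS': "L m (S n w) - S n (L m w) = sc (of_int (m - n)) (S (m + n) w)
     + sc (2 * g) (h (m + n) w) + sc e1 w"
    using LS[of m n w] unfolding g_def e1_def A_def by simp
  have Lh': "L m (h n w) - h n (L m w) = sc (- of_int n) (h (m + n) w) + sc e2 w"
    using L_h[of m n w] unfolding g_def e2_def by simp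
  have "L m (L n w) - L n (L m w) = sc \<alpha> (L m (S n w) - S n (L m w)) + sc \<beta> (L m (h n w) - h n (L m w))"
    unfolding L_def'[of n] \<alpha>_def \<beta>_def by (simp add: L_add L_sc algebra_simps)
  also have "\<dots> = sc (\<alpha> * of_int (m - n)) (S (m + n) w) + sc (\<alpha> * (2 * g) + \<beta> * (- of_int n)) (h (m + n) w)
      + sc (\<alpha> * e1 + \<beta> * e2) w"
    unfolding LS' Lh' by (rule comb3)
  also have "\<dots> = sc (of_int (m - n)) (L (m + n) w) + sc (if m + n = 0 then kappa m n else 0) w"
  proof -
    have 1: "\<alpha> * (2 * g) + \<beta> * (- of_int n) = of_int (m - n) * ((of_int (m + n) + 1) * z / l)"
      unfolding \<alpha>_def \<beta>_def g_def using lnz by (simp add: field_simps power2_eq_square)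
    have 2: "\<alpha> * e1 + \<beta> * e2 = (if m + n = 0 then kappa m n else 0)"
      unfolding \<alpha>_def \<beta>_def e1_def e2_def kappa_def A_def g_def using lnz by (simp add: field_simps)
    have R: "sc (of_int (m - n)) (L (m + n) w) + sc (if m + n = 0 then kappa m n else 0) w
      = sc (of_int (m - n) * \<alpha>) (S (m + n) w) + sc (of_int (m - n) * ((of_int (m + n) + 1) * z / l)) (h (m + n) w)
        + sc (if m + n = 0 then kappa m n else 0) w"
      unfolding L_def'[of "m + n"] \<alpha>_def by (rule comb2)
    show ?thesis unfolding R 1 2 by (simp add: mult.commute)
  qed
  finally show ?thesis .
qed


lemma kappa2: "kappa 2 (- 2) = 1 / 2 - 6 * z ^ 2 / l"
proof -
  have I: "{- \<bar>2\<bar>..\<bar>2\<bar>} = {- 2, - 1, 0, 1, 2::int}" by auto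
  have "(\<Sum>k\<in>{- \<bar>2\<bar>..\<bar>2::int\<bar>}. anomc 2 (- 2 - k) k) = 1"
    unfolding I by (simp add: anomc_def)
  then show ?thesis unfolding kappa_def by (simp add: field_simps power2_eq_square)
qed

definition dp :: "int \<Rightarrow> 'm \<Rightarrow> 'm" where "dp p x = d p x - L p x"

lemma dp_hom: "module_hom sc sc (dp p)"
  by (simp add: module_hom_def module_hom_axioms_def module_axioms dp_def d_add L_add d_sc L_sc
      scale_right_diff_distrib)

lemma swap_diff: "(x1::'a::ab_group_add) - x2 = x3 - x4 \<Longrightarrow> x1 - x3 = x2 - x4"
  by (simp add: algebra_simps)

lemma dp_h: "dp p (h r x) = h r (dp p x)"
proof -
  have "d p (h r x) - h r (d p x) = L p (h r x) - h r (L p x)"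
    using dh[of p r x] L_h[of p r x] by (rule trans[OF _ sym])
  then show ?thesis unfolding dp_def h_diff by (rule swap_diff)
qed

lemma dp_L: "dp p (L q x) = L q (dp p x)"
  by (rule L_commute[OF dp_hom dp_h])

lemma dp_zero[simp]: "dp p 0 = 0" using module_hom.zero[OF dp_hom] .

lemma DD: "d m (d n w) - d n (d m w) = (dp m (dp n w) - dp n (dp m w)) + (L m (L n w) - L n (L m w))"
proof -
  have dsp: "d p x = dp p x + L p x" for p x unfolding dp_def by simp
  have "d m (d n w) = dp m (dp n w) + dp m (L n w) + L m (dp n w) + L m (L n w)"
    unfolding dsp[of n w] dsp[of m "dp n w + L n w"] using module_hom.add[OF dp_hom] L_add by (simp add: add.assoc)
  moreover have "d n (d m w) = dp n (dp m w) + dp n (L m w) + L n (dp m w) + L n (L m w)"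
    unfolding dsp[of m w] dsp[of n "dp m w + L m w"] using module_hom.add[OF dp_hom] L_add by (simp add: add.assoc)
  ultimately show ?thesis by (simp add: dp_L algebra_simps)
qed

lemma dpdp: "m + n \<noteq> 0 \<Longrightarrow> dp m (dp n w) - dp n (dp m w) = sc (of_int (m - n)) (dp (m + n) w)"
  using DD[of m n w] dd[of m n w] LL[of m n w]
  by (simp add: dp_def scale_right_diff_distrib algebra_simps)

lemma all_dp:
  assumes v: "\<forall>p\<ge>- 2. dp p v = 0"
  shows "dp p v = 0"
proof -
  have ind: "dp (- 2 - int j) v = 0" for j
  proof (induction j)
    case 0 then show ?case using v by simp
  next
    case (Suc j)
    define q where "q = - 2 - int j"
    have "dp (- 1) (dp q v) - dp q (dp (- 1) v) = sc (of_int (- 1 - q)) (dp (- 1 + q) v)"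
      by (rule dpdp) (simp add: q_def)
    moreover have "dp q v = 0" using Suc q_def by simp
    moreover have "dp (- 1) v = 0" using v by simp
    ultimately have "sc (of_int (- 1 - q)) (dp (- 1 + q) v) = 0" by simp
    moreover have "(of_int (- 1 - q) :: complex) \<noteq> 0"
    proof -
      have "- 1 - q \<noteq> 0" unfolding q_def by simp
      then show ?thesis by (metis of_int_eq_0_iff)
    qed
    ultimately have "dp (- 1 + q) v = 0" by simp
    moreover have "- 1 + q = - 2 - int (Suc j)" unfolding q_def by simp
    ultimately show ?case by metis
  qed
  show ?thesis
  proof (cases "p \<ge> - 2")
    case True then show ?thesis using v by simp
  next
    case False
    then have "p = - 2 - int (nat (- 2 - p))" by simp
    then show ?thesis using ind by metis
  qed
qed

lemma L_inv:
  assumes W: "subspace W" and hW: "\<forall>r. h r ` W \<subseteq> W" and x: "x \<in> W"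
  shows "L n x \<in> W"
proof -
  obtain N where N: "kl N x" using ex_kl by blast
  have hx: "y \<in> W \<Longrightarrow> h r y \<in> W" for r y using hW by auto
  have "Q a b x \<in> W" for a b unfolding Q_def using hx x by simp
  then have "S n x \<in> W"
    unfolding S_eq[OF N, of "{n - N<..<N}" n, simplified] by (intro subspace_sum[OF W]) auto
  then show ?thesis unfolding L_def'
    by (intro subspace_add[OF W] subspace_scale[OF W] hx x)
qed

lemma main:
  assumes simple: "simple_Dbar sc d h" and rm: "rM_minus_infty sc d h l z"
  shows "hgen sc h (K0 sc d h l z) = UNIV \<and> (\<forall>n v. d n v = L n v) \<and> c = 1 - 12 * z ^ 2 / l
     \<and> simple_hbar_sub sc h (hgen sc h (K0 sc d h l z))"
proof -
  have simp_sub: "\<And>W. subspace W \<Longrightarrow> (\<forall>m. d m ` W \<subseteq> W) \<Longrightarrow> (\<forall>r. h r ` W \<subseteq> W) \<Longrightarrow> W = {0} \<or> W = UNIV"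
    using simple unfolding simple_Dbar_def by blast
  obtain v where vY: "v \<in> Yset sc d h l z (- 2)" and v0: "v \<noteq> 0"
    using rm unfolding rM_minus_infty_def by blast
  have vdp: "\<forall>p\<ge>- 2. dp p v = 0" using vY unfolding Yset_def dp_def by auto
  have vall: "dp p v = 0" for p using all_dp[OF vdp] .
  have vK: "v \<in> K0 sc d h l z"
    using vY vall unfolding K0_def Yset_def dp_def by auto
  define W where "W = {x. \<forall>p. dp p x = 0}"
  have Wsub: "subspace W" unfolding W_def
    by (rule subspaceI) (simp_all add: module_hom.add[OF dp_hom] module_hom.scale[OF dp_hom])
  have Wh: "\<forall>r. h r ` W \<subseteq> W" unfolding W_def by (auto simp: dp_h)
  have Wd: "\<forall>m. d m ` W \<subseteq> W" unfolding W_def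
  proof (intro allI subsetI)
    fix m y assume "y \<in> d m ` {x. \<forall>p. dp p x = 0}"
    then obtain x where x: "\<forall>p. dp p x = 0" and y: "y = d m x" by auto
    have "d m x = L m x" using x[rule_format, of m] unfolding dp_def by simp
    then show "y \<in> {x. \<forall>p. dp p x = 0}" using x y by (simp add: dp_L)
  qed
  have "v \<in> W" unfolding W_def using vall by simp
  then have "W = UNIV" using simp_sub[OF Wsub Wd Wh] v0 by auto
  then have dL: "d n x = L n x" for n x unfolding W_def dp_def by auto
  have dinv: "\<forall>m. d m ` W' \<subseteq> W'" if "subspace W'" "\<forall>r. h r ` W' \<subseteq> W'" for W'
    using L_inv[OF that] dL by auto
  define H where "H = hgen sc h (K0 sc d h l z)"
  have Hsub: "subspace H" unfolding H_def hgen_def by (rule subspace_Inter) auto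
  have Hh: "\<forall>r. h r ` H \<subseteq> H" unfolding H_def hgen_def by blast
  have vH: "v \<in> H" unfolding H_def hgen_def using vK by blast
  have HU: "H = UNIV" using simp_sub[OF Hsub dinv[OF Hsub Hh] Hh] vH v0 by auto
  have cc: "c = 1 - 12 * z ^ 2 / l"
  proof -
    have e1: "L 2 (L (- 2) v) - L (- 2) (L 2 v) = sc 4 (L 0 v) + sc (c / 2) v"
      using dd[of 2 "- 2" v] unfolding dL by simp
    have e2: "L 2 (L (- 2) v) - L (- 2) (L 2 v) = sc 4 (L 0 v) + sc (kappa 2 (- 2)) v"
      using LL[of 2 "- 2" v] by simp
    have "sc (c / 2) v = sc (kappa 2 (- 2)) v" using e1 e2 by (metis add_left_cancel)
    then have "c / 2 = kappa 2 (- 2)" using v0 scale_cancel_right by blast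
    then have h2: "c / 2 = 1 / 2 - 6 * z ^ 2 / l" unfolding kappa2 .
    have "c = 2 * (c / 2)" by simp
    also have "\<dots> = 2 * (1 / 2 - 6 * z ^ 2 / l)" unfolding h2 ..
    also have "\<dots> = 1 - 12 * z ^ 2 / l" by (simp add: right_diff_distrib)
    finally show ?thesis .
  qed
  have sH: "simple_hbar_sub sc h H"
    unfolding simple_hbar_sub_def HU
  proof (intro conjI allI impI)
    show "subspace UNIV" by simp
    show "\<exists>v'\<in>(UNIV::'m set). v' \<noteq> 0" using v0 by blast
    fix W' r
    show "h r ` UNIV \<subseteq> UNIV" by simp
  next
    fix W' assume "subspace W' \<and> W' \<subseteq> UNIV \<and> (\<forall>r. h r ` W' \<subseteq> W')"
    then show "W' = {0} \<or> W' = UNIV" using simp_sub dinv by blast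
  qed
  show ?thesis using HU dL cc sH unfolding H_def by blast
qed

end

theorem proposition5p4:
  fixes sc :: "complex \<Rightarrow> 'm::ab_group_add \<Rightarrow> 'm"
    and d h :: "int \<Rightarrow> 'm \<Rightarrow> 'm"
    and c zM l :: complex
  assumes "is_Dbar_module sc d h c zM l"
    and "restricted d h"
    and "simple_Dbar sc d h"
    and "l \<noteq> 0"
    and "rM_minus_infty sc d h l zM"
  shows "\<exists>z::complex.
           hgen sc h (K0 sc d h l zM) = UNIV \<and>
           zM = z \<and>
           (\<forall>n v. d n v = Lbar sc h l z n v) \<and>
           c = 1 - 12 * z ^ 2 / l \<and>
           simple_hbar_sub sc h (hgen sc h (K0 sc d h l zM))"
proof -
  have D: "dbar sc d h c zM l"
    using assms(1,2,4) unfolding is_Dbar_module_def dbar_def dbar_axioms_def by blast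
  interpret dbar sc d h c zM l by (rule D)
  show ?thesis using main[OF assms(3,5)] by blast
qed

end
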